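(* For every $N$-relay FD 1-2-1 network with graph $G=([0:N+1],E)$ and positive rational link capacities as in the context, the linear program P1 has an optimal solution $(x_p)_{p\in\mathcal P}$ with at most $2N+2$ indices $p$ such that $x_p>0$. Consequently $\mathsf{C}_{\rm cs,iid}$ (FD states) can be achieved by activating at most $2N+2$ paths.
   Context: Nodes are $[0:N+1]$; node $0$ is the source, $N+1$ the destination, $[1:N]$ relays. $E\subseteq\{(i,j): i\in[0:N],\ j\in[1:N+1],\ i\ne j\}$ is a set of directed links; each $(i,j)\in E$ has a positive rational capacity $\ell_{j,i}$. Paths: $\mathcal P$ is the set of all directed paths $p=(v_0,\dots,v_m)$ of distinct nodes with $v_0=0$, $v_m=N+1$ and $(v_{k-1},v_k)\in E$. For $i$ on $p$, $p.\mathrm{nx}(i)$, $p.\mathrm{pr}(i)$ are the nodes following and preceding $i$ on $p$; $\mathcal P_i$ is the set of paths containing $i$. $\mathsf C_p=\min_{(i,j)\text{ consecutive on }p}\ell_{j,i}$ and $f^p_{j,i}=\mathsf C_p/\ell_{j,i}$ for consecutive $(i,j)$ on $p$. P1 is the linear program $\max\sum_{p\in\mathcal P}x_p\mathsf C_p$ subject to $x_p\ge0$ for all $p$; $\sum_{p\in\mathcal P_i}x_p f^p_{p.\mathrm{nx}(i),i}\le1$ for all $i\in[0:N]$; $\sum_{p\in\mathcal P_i}x_pf^p_{i,p.\mathrm{pr}(i)}\le1$ for all $i\in[1:N+1]$. Its optimal value equals $\mathsf{C}_{\rm cs,iid}$, the FD approximate capacity $\max_\lambda\min_\Omega\sum_{i\in\Omega,j\in\Omega^c}(\sum_{s:\,(i,j)\text{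 active in } s}\lambda_s)\ell_{j,i}$ (FD states, $0\in\Omega\subseteq[0:N]$). *)

theory Defs
  imports Complex_Main
begin

text \<open>A link from i to j is the pair (i,j) in E; its capacity is l j i (paper: l_{j,i}).\<close>

definition valid_links :: "nat \<Rightarrow> (nat \<times> nat) set \<Rightarrow> bool" where
  "valid_links N E \<longleftrightarrow> E \<subseteq> {(i,j). i \<le> N \<and> 1 \<le> j \<and> j \<le> Suc N \<and> i \<noteq> j}"

definition path_links :: "nat list \<Rightarrow> (nat \<times> nat) set" where
  "path_links p = set (zip p (tl p))"

definition paths :: "nat \<Rightarrow> (nat \<times> nat) set \<Rightarrow> nat list set" where
  "paths N E = {p. p \<noteq> [] \<and> distinct p \<and> hd p = 0 \<and> last p = Suc N \<and> path_links p \<subseteq> E}"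

definition path_cap :: "(nat \<Rightarrow> nat \<Rightarrow> real) \<Rightarrow> nat list \<Rightarrow> real" where
  "path_cap l p = Min {l j i | i j. (i, j) \<in> path_links p}"

definition frac :: "(nat \<Rightarrow> nat \<Rightarrow> real) \<Rightarrow> nat list \<Rightarrow> nat \<Rightarrow> nat \<Rightarrow> real" where
  "frac l p j i = path_cap l p / l j i"

definition nx :: "nat list \<Rightarrow> nat \<Rightarrow> nat" where
  "nx p i = (THE j. (i, j) \<in> path_links p)"

definition pr :: "nat list \<Rightarrow> nat \<Rightarrow> nat" where
  "pr p i = (THE k. (k, i) \<in> path_links p)"

definition P1_feasible :: "nat \<Rightarrow> (nat \<times> nat) set \<Rightarrow> (nat \<Rightarrow> nat \<Rightarrow> real) \<Rightarrow> (nat list \<Rightarrow> real) \<Rightarrow> bool" where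
  "P1_feasible N E l x \<longleftrightarrow>
     (\<forall>p \<in> paths N E. x p \<ge> 0) \<and>
     (\<forall>i \<in> {0..N}. (\<Sum>p \<in> {p \<in> paths N E. i \<in> set p}. x p * frac l p (nx p i) i) \<le> 1) \<and>
     (\<forall>i \<in> {1..Suc N}. (\<Sum>p \<in> {p \<in> paths N E. i \<in> set p}. x p * frac l p i (pr p i)) \<le> 1)"

definition P1_objective :: "nat \<Rightarrow> (nat \<times> nat) set \<Rightarrow> (nat \<Rightarrow> nat \<Rightarrow> real) \<Rightarrow> (nat list \<Rightarrow> real) \<Rightarrow> real" where
  "P1_objective N E l x = (\<Sum>p \<in> paths N E. x p * path_cap l p)"

definition P1_optimal :: "nat \<Rightarrow> (nat \<times> nat) set \<Rightarrow> (nat \<Rightarrow> nat \<Rightarrow> real) \<Rightarrow> (nat list \<Rightarrow> real) \<Rightarrow> bool" where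
  "P1_optimal N E l x \<longleftrightarrow> P1_feasible N E l x \<and>
     (\<forall>y. P1_feasible N E l y \<longrightarrow> P1_objective N E l y \<le> P1_objective N E l x)"

end

theory Submission
  imports Defs "HOL-Analysis.Analysis"
begin


lemma kernel_exists:
  fixes a :: "nat \<Rightarrow> 'p \<Rightarrow> real"
  assumes "finite S" "card S > k"
  shows "\<exists>d. (\<forall>s. s \<notin> S \<longrightarrow> d s = 0) \<and> (\<exists>s\<in>S. d s \<noteq> 0) \<and> (\<forall>j<k. (\<Sum>s\<in>S. a j s * d s) = 0)"
  using assms
proof (induction k arbitrary: S a)
  case 0
  then obtain s0 where "s0 \<in> S" by fastforce
  then show ?case by (rule_tac x="\<lambda>s. if s = s0 then 1 else 0" in exI) auto
next
  case (Suc k)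
  show ?case
  proof (cases "\<forall>s\<in>S. a k s = 0")
    case True
    from Suc.IH[of S a] Suc.prems obtain d where d: "\<forall>s. s \<notin> S \<longrightarrow> d s = 0" "\<exists>s\<in>S. d s \<noteq> 0" "\<forall>j<k. (\<Sum>s\<in>S. a j s * d s) = 0" by auto
    have "\<forall>j<Suc k. (\<Sum>s\<in>S. a j s * d s) = 0"
      using d(3) True by (auto simp: less_Suc_eq)
    then show ?thesis using d by blast
  next
    case False
    then obtain s0 where s0: "s0 \<in> S" "a k s0 \<noteq> 0" by auto
    define S' where "S' = S - {s0}"
    define b where "b j s = a j s - a j s0 * a k s / a k s0" for j s
    have fS': "finite S'" using Suc.prems S'_def by auto
    have cS': "card S' > k" using Suc.prems s0 S'_def by auto
    from Suc.IH[OF fS' cS', of b] obtain d' where d': "\<forall>s. s \<notin> S' \<longrightarrow> d' s = 0" "\<exists>s\<in>S'. d' s \<noteq> 0" "\<forall>j<k. (\<Sum>s\<in>S'. b j s * d' s) = 0" by auto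
    define t where "t = - (\<Sum>s\<in>S'. a k s * d' s) / a k s0"
    define d where "d = d'(s0 := t)"
    have split: "(\<Sum>s\<in>S. a j s * d s) = a j s0 * t + (\<Sum>s\<in>S'. a j s * d' s)" for j
    proof -
      have "(\<Sum>s\<in>S. a j s * d s) = a j s0 * d s0 + (\<Sum>s\<in>S'. a j s * d s)"
        using Suc.prems(1) s0(1) S'_def by (simp add: sum.remove)
      also have "(\<Sum>s\<in>S'. a j s * d s) = (\<Sum>s\<in>S'. a j s * d' s)"
        by (rule sum.cong) (auto simp: d_def S'_def)
      finally show ?thesis by (simp add: d_def)
    qed
    have "(\<Sum>s\<in>S. a j s * d s) = 0" if "j < Suc k" for j
    proof (cases "j = k")
      case True
      then show ?thesis using split[of k] s0 by (simp add: t_def)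
    next
      case False
      then have jk: "j < k" using that by auto
      have "0 = (\<Sum>s\<in>S'. b j s * d' s)" using d'(3) jk by auto
      also have "\<dots> = (\<Sum>s\<in>S'. a j s * d' s) - a j s0 / a k s0 * (\<Sum>s\<in>S'. a k s * d' s)"
        by (simp add: b_def algebra_simps sum_subtractf sum_distrib_left)
      finally show ?thesis using split[of j] s0 by (simp add: t_def field_simps)
    qed
    moreover have "\<forall>s. s \<notin> S \<longrightarrow> d s = 0" using d'(1) s0 by (auto simp: d_def S'_def)
    moreover have "\<exists>s\<in>S. d s \<noteq> 0" using d'(2) by (auto simp: d_def S'_def)
    ultimately show ?thesis by blast
  qed
qed

definition feas :: "'p set \<Rightarrow> (nat \<Rightarrow> 'p \<Rightarrow> real) \<Rightarrow> nat \<Rightarrow> ('p \<Rightarrow> real) \<Rightarrow> bool" where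
  "feas P a m x \<longleftrightarrow> (\<forall>p\<in>P. 0 \<le> x p) \<and> (\<forall>j<m. (\<Sum>p\<in>P. a j p * x p) \<le> 1)"

definition obj :: "'p set \<Rightarrow> ('p \<Rightarrow> real) \<Rightarrow> ('p \<Rightarrow> real) \<Rightarrow> real" where
  "obj P c x = (\<Sum>p\<in>P. x p * c p)"

lemma opt_exists:
  assumes fin: "finite P" and m: "0 < m" and pos: "\<forall>p\<in>P. a 0 p > 0"
  shows "\<exists>x. feas P a m x \<and> (\<forall>y. feas P a m y \<longrightarrow> obj P c y \<le> obj P c x)"
proof -
  define b where "b p = 1 / a 0 p" for p
  have bound: "y p \<le> b p" if "feas P a m y" "p \<in> P" for y p
  proof -
    have "(\<Sum>q\<in>P. a 0 q * y q) \<le> 1" using that(1) m by (auto simp: feas_def)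
    moreover have "a 0 p * y p \<le> (\<Sum>q\<in>P. a 0 q * y q)"
      using that fin pos by (intro member_le_sum) (auto simp: feas_def)
    ultimately have "a 0 p * y p \<le> 1" by linarith
    then show ?thesis using pos that(2) by (simp add: b_def field_simps)
  qed
  define I where "I p = (if p \<in> P then {0..b p} else {0::real})" for p
  define K where "K = PiE UNIV I"
  have "compactin (product_topology (\<lambda>_. euclidean) UNIV) K"
    unfolding K_def compactin_PiE by (auto simp: I_def)
  then have cK: "compact K" by (simp add: euclidean_product_topology)
  have cF: "closed {x. feas P a m x}"
  proof -
    have "{x. feas P a m x} = {x. \<forall>p. p \<in> P \<longrightarrow> 0 \<le> x p} \<inter> {x. \<forall>j. j < m \<longrightarrow> (\<Sum>p\<in>P. a j p * x p) \<le> 1}"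
      by (auto simp: feas_def)
    moreover have "closed {x::'a\<Rightarrow>real. \<forall>p. p \<in> P \<longrightarrow> 0 \<le> x p}"
      by (intro closed_Collect_all closed_Collect_imp open_Collect_const closed_Collect_le continuous_intros) auto
    moreover have "closed {x::'a\<Rightarrow>real. \<forall>j. j < m \<longrightarrow> (\<Sum>p\<in>P. a j p * x p) \<le> 1}"
      by (intro closed_Collect_all closed_Collect_imp open_Collect_const closed_Collect_le continuous_intros
          continuous_on_product_coordinates) 
    ultimately show ?thesis by auto
  qed
  define F where "F = K \<inter> {x. feas P a m x}"
  have "compact F" unfolding F_def using cK cF by (rule compact_Int_closed)
  moreover have "(\<lambda>_. 0) \<in> F" by (auto simp: F_def K_def I_def feas_def b_def pos less_imp_le)
  moreover have "continuous_on F (obj P c)"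
    unfolding obj_def by (intro continuous_intros continuous_on_subset[OF continuous_on_product_coordinates]) auto
  ultimately obtain x where x: "x \<in> F" "\<forall>y\<in>F. obj P c y \<le> obj P c x"
    using continuous_attains_sup by blast
  have "obj P c y \<le> obj P c x" if y: "feas P a m y" for y
  proof -
    define y' where "y' p = (if p \<in> P then y p else 0)" for p
    have "feas P a m y'" using y by (simp add: feas_def y'_def)
    moreover have "y' \<in> K" using bound[OF y] y by (auto simp: K_def I_def y'_def feas_def)
    ultimately have "obj P c y' \<le> obj P c x" using x(2) by (auto simp: F_def)
    moreover have "obj P c y' = obj P c y" unfolding obj_def by (rule sum.cong) (auto simp: y'_def)
    ultimately show ?thesis by simp
  qed
  then show ?thesis using x(1) by (auto simp: F_def)
qed

lemma opt_sparse:
  assumes fin: "finite P" and m: "0 < m" and pos: "\<forall>p\<in>P. a 0 p > 0"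
  shows "\<exists>x. feas P a m x \<and> (\<forall>y. feas P a m y \<longrightarrow> obj P c y \<le> obj P c x) \<and> card {p\<in>P. x p > 0} \<le> m"
proof -
  let ?opt = "\<lambda>x. feas P a m x \<and> (\<forall>y. feas P a m y \<longrightarrow> obj P c y \<le> obj P c x)"
  obtain x0 where "?opt x0" using opt_exists[of P m a c] assms by blast
  then have "\<exists>x. ?opt x \<and> (\<forall>y. ?opt y \<longrightarrow> card {p\<in>P. x p > 0} \<le> card {p\<in>P. y p > 0})"
    by (rule ex_has_least_nat[where m="\<lambda>x. card {p\<in>P. x p > 0}"])
  then obtain x where xx: "?opt x \<and> (\<forall>y. ?opt y \<longrightarrow> card {p\<in>P. x p > 0} \<le> card {p\<in>P. y p > 0})" ..
  have x: "?opt x" using xx by (rule conjunct1)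
  have xmin: "\<forall>y. ?opt y \<longrightarrow> card {p\<in>P. x p > 0} \<le> card {p\<in>P. y p > 0}" using xx by (rule conjunct2)
  have xf: "feas P a m x" and xmax: "\<forall>y. feas P a m y \<longrightarrow> obj P c y \<le> obj P c x" using x by simp_all
  define S where "S = {p\<in>P. x p > 0}"
  have fS: "finite S" and SP: "S \<subseteq> P" using fin by (auto simp: S_def)
  show ?thesis
  proof (rule ccontr)
    assume "\<not> ?thesis"
    then have big: "card S > m" unfolding S_def using xf xmax by (meson not_le)
    obtain d0 where d0: "\<forall>s. s \<notin> S \<longrightarrow> d0 s = 0" "\<exists>s\<in>S. d0 s \<noteq> 0" "\<forall>j<m. (\<Sum>s\<in>S. a j s * d0 s) = 0"
      using kernel_exists[OF fS big, of a] by blast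
    define d where "d = (if (\<Sum>p\<in>S. d0 p * c p) \<ge> 0 then d0 else (\<lambda>p. - d0 p))"
    have d: "\<forall>s. s \<notin> S \<longrightarrow> d s = 0" "\<exists>s\<in>S. d s \<noteq> 0" "\<forall>j<m. (\<Sum>s\<in>S. a j s * d s) = 0"
      "(\<Sum>p\<in>S. d p * c p) \<ge> 0"
    proof -
      show "\<forall>s. s \<notin> S \<longrightarrow> d s = 0" using d0(1) by (simp add: d_def)
      show "\<exists>s\<in>S. d s \<noteq> 0" using d0(2) by (simp add: d_def)
      show "\<forall>j<m. (\<Sum>s\<in>S. a j s * d s) = 0" using d0(3) by (simp add: d_def sum_negf)
      show "(\<Sum>p\<in>S. d p * c p) \<ge> 0" by (simp add: d_def sum_negf)
    qed
    have rowP: "(\<Sum>p\<in>P. a j p * d p) = 0" if "j < m" for j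
    proof -
      have "(\<Sum>p\<in>P. a j p * d p) = (\<Sum>p\<in>S. a j p * d p)"
        using fin SP d(1) by (intro sum.mono_neutral_right) auto
      then show ?thesis using d(3) that by simp
    qed
    have objd: "(\<Sum>p\<in>P. d p * c p) \<ge> 0"
    proof -
      have "(\<Sum>p\<in>P. d p * c p) = (\<Sum>p\<in>S. d p * c p)"
        using fin SP d(1) by (intro sum.mono_neutral_right) auto
      then show ?thesis using d(4) by simp
    qed
    have "\<exists>s\<in>S. d s < 0"
    proof (rule ccontr)
      assume "\<not> ?thesis"
      then have nn: "\<forall>s\<in>S. d s \<ge> 0" by (simp add: not_less)
      have a0S: "a 0 s > 0" if "s \<in> S" for s using pos SP that by blast
      have s0: "(\<Sum>s\<in>S. a 0 s * d s) = 0" using d(3) m by simp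
      have ge: "\<forall>s\<in>S. a 0 s * d s \<ge> 0" proof
        fix s assume "s \<in> S"
        then have "a 0 s > 0" "d s \<ge> 0" using nn a0S by simp_all
        then show "a 0 s * d s \<ge> 0" by simp
      qed
      have z: "\<forall>s\<in>S. a 0 s * d s = 0"
        using sum_nonneg_eq_0_iff[OF fS, of "\<lambda>s. a 0 s * d s"] ge s0 by simp
      have "\<forall>s\<in>S. d s = 0"
      proof
        fix s assume "s \<in> S"
        then have "a 0 s * d s = 0" "a 0 s > 0" using z a0S by simp_all
        then show "d s = 0" by simp
      qed
      then show False using d(2) by simp
    qed
    define N where "N = {s\<in>S. d s < 0}"
    have fN: "finite N" "N \<noteq> {}" using fS \<open>\<exists>s\<in>S. d s < 0\<close> by (auto simp: N_def)
    define t where "t = Min ((\<lambda>s. x s / (- d s)) ` N)"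
    obtain s1 where s1: "s1 \<in> N" "t = x s1 / (- d s1)"
    proof -
      have "t \<in> (\<lambda>s. x s / (- d s)) ` N" unfolding t_def using fN by (intro Min_in) auto
      then show ?thesis using that by blast
    qed
    have tle: "t \<le> x s / (- d s)" if "s \<in> N" for s
      unfolding t_def using fN that by (intro Min_le) auto
    have t0: "t \<ge> 0" using s1 unfolding N_def S_def by (simp add: divide_pos_neg less_imp_le)
    define y where "y p = x p + t * d p" for p
    have yfeas: "feas P a m y"
      unfolding feas_def
    proof (intro conjI ballI allI impI)
      fix p assume p: "p \<in> P"
      show "0 \<le> y p"
      proof (cases "p \<in> N")
        case True
        then have "d p < 0" by (auto simp: N_def)
        with tle[OF True] have "t * (- d p) \<le> x p" by (simp add: field_simps)
        then show ?thesis by (simp add: y_def)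
      next
        case False
        then have "d p \<ge> 0 \<or> p \<notin> S" by (auto simp: N_def)
        moreover have "x p \<ge> 0" using xf p by (simp add: feas_def)
        ultimately show ?thesis using d(1) t0 by (auto simp: y_def)
      qed
    next
      fix j assume j: "j < m"
      have "(\<Sum>p\<in>P. a j p * y p) = (\<Sum>p\<in>P. a j p * x p) + t * (\<Sum>p\<in>P. a j p * d p)"
        by (simp add: y_def algebra_simps sum.distrib sum_distrib_left)
      then show "(\<Sum>p\<in>P. a j p * y p) \<le> 1" using rowP[OF j] xf j by (simp add: feas_def)
    qed
    have "obj P c y = obj P c x + t * (\<Sum>p\<in>P. d p * c p)"
      by (simp add: obj_def y_def algebra_simps sum.distrib sum_distrib_left)
    then have "obj P c y \<ge> obj P c x" using objd t0 by simp
    then have yopt: "?opt y" using xmax yfeas by (meson order_trans)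
    have "{p\<in>P. y p > 0} \<subseteq> S - {s1}"
    proof
      fix p assume p: "p \<in> {p\<in>P. y p > 0}"
      have "p \<in> S"
      proof (rule ccontr)
        assume "p \<notin> S"
        then have "x p \<le> 0" "d p = 0" using p d(1) by (auto simp: S_def)
        then show False using p by (auto simp: y_def)
      qed
      moreover have "y s1 = 0" using s1 by (auto simp: y_def N_def)
      ultimately show "p \<in> S - {s1}" using p by auto
    qed
    then have "card {p\<in>P. y p > 0} \<le> card (S - {s1})" using fS by (intro card_mono) auto
    also have "\<dots> < card S" using fS s1 by (intro card_Diff1_less) (auto simp: N_def)
    finally have "card {p\<in>P. y p > 0} < card {p\<in>P. x p > 0}" unfolding S_def .
    then show False using xmin yopt by (meson not_le)
  qed
qed



lemma pl_nth: "path_links p = {(p!k, p!Suc k) | k. Suc k < length p}"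
  unfolding path_links_def set_zip by (auto simp: nth_tl)

lemma path_len: assumes "p \<in> paths N E" shows "length p \<ge> 2"
proof -
  have "p \<noteq> []" "hd p = 0" "last p = Suc N" using assms by (auto simp: paths_def)
  then show ?thesis by (cases p; cases "tl p") auto
qed

lemma path_first: assumes "p \<in> paths N E" shows "(0, p!1) \<in> path_links p"
proof -
  have "hd p = 0" "p \<noteq> []" using assms by (auto simp: paths_def)
  then have "p!0 = 0" by (simp add: hd_conv_nth)
  moreover have "Suc 0 < length p" using path_len[OF assms] by simp
  ultimately show ?thesis unfolding pl_nth by force
qed

lemma path_first_unique: assumes "p \<in> paths N E" "(0, j) \<in> path_links p" shows "j = p!1"
proof -
  have d: "distinct p" and "hd p = 0" "p \<noteq> []" using assms by (auto simp: paths_def)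
  then have p0: "p!0 = 0" by (simp add: hd_conv_nth)
  obtain k where k: "0 = p!k" "j = p!Suc k" "Suc k < length p" using assms(2) unfolding pl_nth by blast
  have "p \<noteq> []" using \<open>p \<noteq> []\<close> .
  then have "k = 0" using nth_eq_iff_index_eq[OF d, of k 0] k p0 by simp
  then show ?thesis using k by simp
qed

lemma nx0: assumes "p \<in> paths N E" shows "nx p 0 = p!1"
  unfolding nx_def using path_first[OF assms] path_first_unique[OF assms] by blast

lemma path_cap_pos:
  assumes "p \<in> paths N E" "\<forall>(i, j) \<in> E. l j i \<in> \<rat> \<and> l j i > 0"
  shows "path_cap l p > 0"
proof -
  have eq: "{l j i | i j. (i, j) \<in> path_links p} = (\<lambda>(i,j). l j i) ` path_links p" by force
  have "finite (path_links p)" by (simp add: path_links_def)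
  moreover have "path_links p \<noteq> {}" using path_first[OF assms(1)] by blast
  moreover have "path_links p \<subseteq> E" using assms(1) by (simp add: paths_def)
  ultimately show ?thesis unfolding path_cap_def eq using assms(2)
    by (subst Min_gr_iff) auto
qed

lemma paths_finite: assumes "valid_links N E" shows "finite (paths N E)"
proof -
  have "paths N E \<subseteq> {xs. set xs \<subseteq> {0..Suc N} \<and> length xs \<le> Suc (Suc N)}"
  proof
    fix p assume p: "p \<in> paths N E"
    have sub: "set p \<subseteq> {0..Suc N}"
    proof
      fix v assume "v \<in> set p"
      then obtain k where k: "k < length p" "v = p!k" by (auto simp: in_set_conv_nth)
      show "v \<in> {0..Suc N}"
      proof (cases "Suc k < length p")
        case True
        then have "(p!k, p!Suc k) \<in> path_links p" unfolding pl_nth by blast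
        then have "(p!k, p!Suc k) \<in> E" using p by (auto simp: paths_def)
        then show ?thesis using assms k by (auto simp: valid_links_def)
      next
        case False
        then have "k = length p - 1" using k by simp
        moreover have "p \<noteq> []" using p by (simp add: paths_def)
        ultimately have "v = last p" using k by (simp add: last_conv_nth)
        then show ?thesis using p by (simp add: paths_def)
      qed
    qed
    have "length p = card (set p)" using p by (simp add: paths_def distinct_card)
    also have "\<dots> \<le> card {0..Suc N}" using sub by (intro card_mono) auto
    finally show "p \<in> {xs. set xs \<subseteq> {0..Suc N} \<and> length xs \<le> Suc (Suc N)}" using sub by simp
  qed
  then show ?thesis using finite_lists_length_le[of "{0..Suc N}" "Suc (Suc N)"] finite_subset by blast
qed


definition Amat :: "nat \<Rightarrow> (nat \<Rightarrow> nat \<Rightarrow> real) \<Rightarrow> nat \<Rightarrow> nat list \<Rightarrow> real" where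
  "Amat N l j p = (if j \<le> N then (if j \<in> set p then frac l p (nx p j) j else 0)
      else (if j - N \<in> set p then frac l p (j - N) (pr p (j - N)) else 0))"

lemma feas_iff:
  assumes fin: "finite (paths N E)"
  shows "P1_feasible N E l x \<longleftrightarrow> feas (paths N E) (Amat N l) (2 * N + 2) x"
proof -
  let ?P = "paths N E"
  have s1: "(\<Sum>p \<in> {p \<in> ?P. i \<in> set p}. x p * frac l p (nx p i) i) = (\<Sum>p\<in>?P. Amat N l i p * x p)"
    if "i \<le> N" for i
    using that by (simp add: sum.inter_filter[OF fin] Amat_def; intro sum.cong; simp)
  have s2: "(\<Sum>p \<in> {p \<in> ?P. i \<in> set p}. x p * frac l p i (pr p i)) = (\<Sum>p\<in>?P. Amat N l (i + N) p * x p)"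
    if "1 \<le> i" for i
    using that by (simp add: sum.inter_filter[OF fin] Amat_def; intro sum.cong; simp)
  have "(\<forall>j<2 * N + 2. (\<Sum>p\<in>?P. Amat N l j p * x p) \<le> 1) \<longleftrightarrow>
        (\<forall>i \<in> {0..N}. (\<Sum>p\<in>?P. Amat N l i p * x p) \<le> 1) \<and>
        (\<forall>i \<in> {1..Suc N}. (\<Sum>p\<in>?P. Amat N l (i + N) p * x p) \<le> 1)"
  proof safe
    fix j assume H1: "\<forall>i \<in> {0..N}. (\<Sum>p\<in>?P. Amat N l i p * x p) \<le> 1"
      and H2: "\<forall>i \<in> {1..Suc N}. (\<Sum>p\<in>?P. Amat N l (i + N) p * x p) \<le> 1" and j: "j < 2 * N + 2"
    show "(\<Sum>p\<in>?P. Amat N l j p * x p) \<le> 1"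
    proof (cases "j \<le> N")
      case True then show ?thesis using H1 by simp
    next
      case False
      then have "j - N \<in> {1..Suc N}" "j - N + N = j" using j by auto
      then show ?thesis using H2 by metis
    qed
  qed auto
  then show ?thesis unfolding P1_feasible_def feas_def using s1 s2 by simp
qed

lemma obj_eq: "P1_objective N E l x = obj (paths N E) (path_cap l) x"
  by (simp add: P1_objective_def obj_def)

theorem lemma3:
  fixes N :: nat and E :: "(nat \<times> nat) set" and l :: "nat \<Rightarrow> nat \<Rightarrow> real"
  assumes "valid_links N E"
    and "\<forall>(i, j) \<in> E. l j i \<in> \<rat> \<and> l j i > 0"
  shows "\<exists>x. P1_optimal N E l x \<and> card {p \<in> paths N E. x p > 0} \<le> 2 * N + 2"
proof -
  have fin: "finite (paths N E)" using paths_finite[OF assms(1)] .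
  have pos: "\<forall>p\<in>paths N E. Amat N l 0 p > 0"
  proof
    fix p assume p: "p \<in> paths N E"
    have "p \<noteq> []" "hd p = 0" using p by (simp_all add: paths_def)
    then have "0 \<in> set p" by (metis hd_in_set)
    moreover have "(0, p!1) \<in> E" using path_first[OF p] p by (auto simp: paths_def)
    then have "l (p!1) 0 > 0" using assms(2) by auto
    moreover have "path_cap l p > 0" using path_cap_pos[OF p assms(2)] .
    ultimately show "Amat N l 0 p > 0" by (simp add: Amat_def frac_def nx0[OF p])
  qed
  obtain x where x: "feas (paths N E) (Amat N l) (2 * N + 2) x"
    "\<forall>y. feas (paths N E) (Amat N l) (2 * N + 2) y \<longrightarrow> obj (paths N E) (path_cap l) y \<le> obj (paths N E) (path_cap l) x"
    "card {p\<in>paths N E. x p > 0} \<le> 2 * N + 2"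
    using opt_sparse[of "paths N E" "2 * N + 2" "Amat N l" "path_cap l"] fin pos by auto
  have "P1_optimal N E l x"
    unfolding P1_optimal_def feas_iff[OF fin] obj_eq using x(1,2) by blast
  then show ?thesis using x(3) by blast
qed

end
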